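(* Let $r\in\mathbb{N}_0$, $m\in\mathbb{N}$ with $k:=m-r\ge 2$, and let $x_0\le x_1\le\dots\le x_m$ be real numbers with $x_j<x_{j+r+1}$ for all $0\le j\le m-r-1$; put $d:=2(x_m-x_0)$. If $\varphi,\omega\in\Phi$ satisfy \[ \varphi(t)\le t^{k-1}\int_t^{d}u^{-k}\omega(u)\,du,\quad t\in(0,d/2],\qquad\text{and}\qquad \varphi(t)\le\omega(t),\quad t\in[d/2,d], \] then \[ \Lambda_r(x_0,\dots,x_{m-1};\varphi)\le c\,(x_m-x_0)\Lambda_r(x_0,\dots,x_m;\omega) \quad\text{and}\quad \Lambda_r(x_1,\dots,x_{m};\varphi)\le c\,(x_m-x_0)\Lambda_r(x_0,\dots,x_m;\omega), \] where the constants $c$ depend only on $k$.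
   Context: $\Phi$ denotes the set of nondecreasing functions $\varphi\in C[0,\infty]$ with $\varphi(0)=0$. For an ordered tuple $y_0\le\dots\le y_n$ (here applied with $n=m$ and $n=m-1$, each tuple with its own endpoints): $\mathcal{Q}_{n,r}:=\{(p,q):0\le p,q\le n,\ q-p\ge r+1\}$, $y_{-1}:=y_0-(y_n-y_0)$, $y_{n+1}:=y_n+(y_n-y_0)$, $d(p,q):=\min\{y_{q+1}-y_p,y_q-y_{p-1}\}$, and for $\varphi\in\Phi$, $\Lambda_{p,q,r}(y_0,\dots,y_n;\varphi):=\frac{\int_{y_q-y_p}^{d(p,q)}u^{p+r-q-1}\varphi(u)du}{\prod_{i=0}^{p-1}(y_q-y_i)\prod_{i=q+1}^{n}(y_i-y_p)}$ (empty products $=1$), $\Lambda_r(y_0,\dots,y_n;\varphi):=\max_{(p,q)\in\mathcal{Q}_{n,r}}\Lambda_{p,q,r}(y_0,\dots,y_n;\varphi)$. *)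

theory Defs
  imports "HOL-Analysis.Analysis"
begin

definition inPhi :: "(real \<Rightarrow> real) \<Rightarrow> bool" where
  "inPhi \<phi> \<longleftrightarrow> continuous_on {0..} \<phi> \<and> mono_on {0..} \<phi> \<and> \<phi> 0 = 0"

definition yext :: "(nat \<Rightarrow> real) \<Rightarrow> nat \<Rightarrow> int \<Rightarrow> real" where
  "yext y n i = (if i < 0 then y 0 - (y n - y 0)
                 else if i > int n then y n + (y n - y 0)
                 else y (nat i))"

definition Qset :: "nat \<Rightarrow> nat \<Rightarrow> (nat \<times> nat) set" where
  "Qset n r = {(p, q). p \<le> n \<and> q \<le> n \<and> q \<ge> p + r + 1}"

definition dpq :: "(nat \<Rightarrow> real) \<Rightarrow> nat \<Rightarrow> nat \<Rightarrow> nat \<Rightarrow> real" where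
  "dpq y n p q = min (yext y n (int q + 1) - y p) (y q - yext y n (int p - 1))"

definition Lambda_pqr ::
  "(nat \<Rightarrow> real) \<Rightarrow> nat \<Rightarrow> nat \<Rightarrow> nat \<Rightarrow> nat \<Rightarrow> (real \<Rightarrow> real) \<Rightarrow> real" where
  "Lambda_pqr y n p q r \<phi> =
     integral {y q - y p .. dpq y n p q} (\<lambda>u. u powi (int p + int r - int q - 1) * \<phi> u)
     / ((\<Prod>i<p. y q - y i) * (\<Prod>i\<in>{q+1..n}. y i - y p))"

definition Lambda :: "nat \<Rightarrow> (nat \<Rightarrow> real) \<Rightarrow> nat \<Rightarrow> (real \<Rightarrow> real) \<Rightarrow> real" where
  "Lambda r y n \<phi> = Max ((\<lambda>(p, q). Lambda_pqr y n p q r \<phi>) ` Qset n r)"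

end

theory Submission
  imports Defs
begin

lemma mono_x:
  fixes x :: "nat \<Rightarrow> real"
  assumes "\<forall>i<m. x i \<le> x (Suc i)" "i \<le> j" "j \<le> m"
  shows "x i \<le> x j"
  using assms(2,3)
proof (induction j)
  case 0 then show ?case by simp
next
  case (Suc j)
  show ?case
  proof (cases "i = Suc j")
    case True then show ?thesis by simp
  next
    case False
    then have "x i \<le> x j" using Suc by simp
    also have "x j \<le> x (Suc j)" using assms(1) Suc.prems by simp
    finally show ?thesis .
  qed
qed

lemma yext_in: "0 \<le> i \<Longrightarrow> i \<le> int n \<Longrightarrow> yext y n i = y (nat i)"
  by (simp add: yext_def)

lemma yext_Suc_lt: "q < n \<Longrightarrow> yext y n (int q + 1) = y (Suc q)"
  by (simp add: yext_def nat_add_distrib)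

lemma yext_Suc_eq: "yext y n (int n + 1) = y n + (y n - y 0)"
  by (simp add: yext_def)

lemma yext_pred_pos: "0 < p \<Longrightarrow> p \<le> n \<Longrightarrow> yext y n (int p - 1) = y (p - 1)"
  by (simp add: yext_def nat_diff_distrib)

lemma yext_pred_0: "yext y n (int 0 - 1) = y 0 - (y n - y 0)"
  by (simp add: yext_def)

lemma powi_neg_nat:
  fixes t :: real
  assumes "p + r + 1 \<le> q"
  shows "t powi (int p + int r - int q - 1) = 1 / t ^ (q - p - r + 1)"
proof -
  have "int p + int r - int q - 1 = - int (q - p - r + 1)" using assms by simp
  then have "t powi (int p + int r - int q - 1) = t powi (- int (q - p - r + 1))" by simp
  also have "\<dots> = inverse (t ^ (q - p - r + 1))"
    by (simp only: power_int_minus power_int_of_nat)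
  finally show ?thesis by (simp add: divide_inverse)
qed

lemma powi_neg_k: "(t::real) powi (- int k) = 1 / t ^ k"
  by (simp add: power_int_minus divide_inverse)

lemma prodbound:
  fixes f g :: "nat \<Rightarrow> real"
  assumes "finite A" "B \<subseteq> A" "\<forall>i\<in>A. b \<le> f i" "0 < b"
    "\<forall>i\<in>B. 0 \<le> g i \<and> g i \<le> c * f i"
  shows "prod g B * b ^ (card A - card B) \<le> c ^ (card B) * prod f A"
proof -
  have fB: "finite B" using assms(1,2) finite_subset by blast
  have split: "prod f A = prod f (A - B) * prod f B" using prod.subset_diff[OF assms(2,1)] .
  have c1: "b ^ (card A - card B) \<le> prod f (A - B)"
  proof -
    have "prod (\<lambda>_. b) (A - B) \<le> prod f (A - B)"
      by (rule prod_mono) (use assms(3,4) in auto)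
    moreover have "card (A - B) = card A - card B" using card_Diff_subset[OF fB assms(2)] .
    ultimately show ?thesis by simp
  qed
  have c2: "prod g B \<le> c ^ card B * prod f B"
  proof -
    have "prod g B \<le> prod (\<lambda>i. c * f i) B"
      by (rule prod_mono) (use assms(5) in auto)
    also have "\<dots> = c ^ card B * prod f B" by (simp add: prod.distrib)
    finally show ?thesis .
  qed
  have g0: "0 \<le> prod g B" by (rule prod_nonneg) (use assms(5) in auto)
  have "prod g B * b ^ (card A - card B) \<le> (c ^ card B * prod f B) * prod f (A - B)"
    by (rule mult_mono[OF c2 c1 _ _]) (use g0 c2 assms(4) in auto)
  also have "\<dots> = c ^ card B * prod f A" using split by simp
  finally show ?thesis .
qed

lemma Hbound:
  fixes a t :: real and s :: nat
  assumes a0: "0 < a" and at: "a \<le> t" and sc: "1 \<le> s \<or> t \<le> 2*a"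
  shows "integral {a..t} (\<lambda>v. v^s/v) \<le> t^s"
proof (cases "1 \<le> s")
  case True
  have "integral {a..t} (\<lambda>v. v^s/v) \<le> integral {a..t} (\<lambda>v. t^(s-1))"
  proof (rule integral_le)
    show "(\<lambda>v. v^s/v) integrable_on {a..t}"
      by (rule integrable_continuous_interval) (use a0 in \<open>auto intro!: continuous_intros\<close>)
    show "(\<lambda>v. t^(s-1)) integrable_on {a..t}" by (rule integrable_const_ivl)
    fix v assume v: "v \<in> {a..t}"
    then have "v^s/v = v^(s-1)" using True a0 by (simp add: power_eq_if)
    also have "\<dots> \<le> t^(s-1)" using v a0 by (intro power_mono) auto
    finally show "v^s/v \<le> t^(s-1)" .
  qed
  also have "\<dots> = (t - a) * t^(s-1)" using at by simp
  also have "\<dots> \<le> t * t^(s-1)" using a0 at by (intro mult_right_mono) auto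
  also have "\<dots> = t^s" using True by (simp add: power_eq_if)
  finally show ?thesis .
next
  case False
  then have s0: "s = 0" by simp
  have "integral {a..t} (\<lambda>v. v^s/v) \<le> integral {a..t} (\<lambda>v. 1/a)"
  proof (rule integral_le)
    show "(\<lambda>v. v^s/v) integrable_on {a..t}"
      by (rule integrable_continuous_interval) (use a0 in \<open>auto intro!: continuous_intros\<close>)
    show "(\<lambda>v. 1/a) integrable_on {a..t}" by (rule integrable_const_ivl)
    fix v assume v: "v \<in> {a..t}"
    then show "v^s/v \<le> 1/a" using s0 a0 by (simp add: frac_le)
  qed
  also have "\<dots> = (t - a) / a" using at by simp
  also have "\<dots> \<le> 1" using sc False a0 by (simp add: divide_le_eq)
  finally show ?thesis using s0 by simp
qed

lemma hardy:
  fixes g :: "real \<Rightarrow> real" and a \<beta> c0 :: real and s :: nat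
  assumes a0: "0 < a" and ab: "a \<le> \<beta>" and bc: "\<beta> \<le> c0"
    and gc: "continuous_on {a..c0} g" and g0: "\<forall>t\<in>{a..c0}. 0 \<le> g t"
    and sc: "1 \<le> s \<or> \<beta> \<le> 2*a"
  shows "integral {a..\<beta>} (\<lambda>u. u^s/u * integral {u..c0} g)
           \<le> \<beta>^s * integral {\<beta>..c0} g + integral {a..\<beta>} (\<lambda>t. t^s * g t)"
proof -
  define h where "h = (\<lambda>v::real. v^s/v)"
  define H where "H = (\<lambda>u. integral {a..u} h)"
  define G where "G = (\<lambda>u. integral {u..c0} g)"
  have hc: "continuous_on {a..\<beta>} h"
    unfolding h_def by (rule continuous_intros | use a0 in auto)+
  have hi: "h integrable_on {a..\<beta>}" using hc integrable_continuous_interval by blast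
  have Hc: "continuous_on {a..\<beta>} H"
    unfolding H_def by (rule indefinite_integral_continuous_1[OF hi])
  have gi: "g integrable_on {a..c0}" using gc integrable_continuous_interval by blast
  have Gc0: "continuous_on {a..c0} G"
    unfolding G_def by (rule indefinite_integral_continuous_1'[OF gi])
  have Gc: "continuous_on {a..\<beta>} G" by (rule continuous_on_subset[OF Gc0]) (use bc in auto)
  have Hd: "(H has_vector_derivative h x) (at x)" if x: "x \<in> {a<..<\<beta>}" for x
  proof -
    have "(H has_vector_derivative h x) (at x within {a..\<beta>})"
      unfolding H_def by (rule integral_has_vector_derivative[OF hc]) (use x in auto)
    moreover have "at x within {a..\<beta>} = at x" using x by (intro at_within_Icc_at) auto
    ultimately show ?thesis by simp
  qed
  have Gd: "(G has_vector_derivative - g x) (at x)" if x: "x \<in> {a<..<\<beta>}" for x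
  proof -
    have "(G has_vector_derivative - g x) (at x within {a..c0})"
      unfolding G_def by (rule integral_has_vector_derivative'[OF gc]) (use x bc in auto)
    moreover have "at x within {a..c0} = at x" using x bc by (intro at_within_Icc_at) auto
    ultimately show ?thesis by simp
  qed
  have gcb: "continuous_on {a..\<beta>} g" by (rule continuous_on_subset[OF gc]) (use bc in auto)
  have Hgi: "(\<lambda>t. H t * g t) integrable_on {a..\<beta>}"
    by (rule integrable_continuous_interval) (intro continuous_intros Hc gcb)
  define y where "y = H \<beta> * G \<beta> + integral {a..\<beta>} (\<lambda>t. H t * g t)"
  have Ha: "H a = 0" unfolding H_def by simp
  have int: "((\<lambda>x. H x * - g x) has_integral (H \<beta> * G \<beta> - H a * G a - y)) {a..\<beta>}"
  proof -
    have "((\<lambda>x. - (H x * g x)) has_integral - integral {a..\<beta>} (\<lambda>t. H t * g t)) {a..\<beta>}"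
      using has_integral_neg[OF integrable_integral[OF Hgi]] .
    then show ?thesis unfolding y_def Ha by simp
  qed
  have ibp: "((\<lambda>x. h x * G x) has_integral y) {a..\<beta>}"
    by (rule integration_by_parts_interior[OF bounded_bilinear_mult ab Hc Gc Hd Gd int])
  then have eq: "integral {a..\<beta>} (\<lambda>u. u^s/u * integral {u..c0} g) = y"
    unfolding h_def G_def by (rule integral_unique)
  have Hb: "H t \<le> t^s" if "t \<in> {a..\<beta>}" for t
    unfolding H_def h_def using that sc a0 by (intro Hbound) auto
  have G0: "0 \<le> G \<beta>" unfolding G_def by (rule integral_nonneg) (use gi bc ab g0 in \<open>auto intro: integrable_on_subinterval\<close>)
  have t1: "H \<beta> * G \<beta> \<le> \<beta>^s * G \<beta>"
    using Hb[of \<beta>] ab G0 by (intro mult_right_mono) auto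
  have t2: "integral {a..\<beta>} (\<lambda>t. H t * g t) \<le> integral {a..\<beta>} (\<lambda>t. t^s * g t)"
  proof (rule integral_le[OF Hgi])
    show "(\<lambda>t. t ^ s * g t) integrable_on {a..\<beta>}"
      by (rule integrable_continuous_interval) (intro continuous_intros gcb)
    fix t assume "t \<in> {a..\<beta>}"
    then show "H t * g t \<le> t ^ s * g t" using Hb g0 bc by (intro mult_right_mono) auto
  qed
  show ?thesis unfolding eq y_def using t1 t2 unfolding G_def by linarith
qed

lemma cover_integral:
  fixes f :: "real \<Rightarrow> real" and lo hi :: "'p \<Rightarrow> real"
  assumes fin: "finite S" and fc: "continuous_on {\<alpha>..\<beta>} f" and f0: "\<forall>t\<in>{\<alpha>..\<beta>}. 0 \<le> f t"
    and sub: "\<forall>P\<in>S. \<alpha> \<le> lo P \<and> hi P \<le> \<beta>"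
    and cov: "\<forall>t\<in>{\<alpha>..\<beta>}. \<exists>P\<in>S. t \<in> {lo P..hi P}"
  shows "integral {\<alpha>..\<beta>} f \<le> (\<Sum>P\<in>S. integral {lo P..hi P} f)"
proof -
  have fi: "f integrable_on {\<alpha>..\<beta>}" using fc integrable_continuous_interval by blast
  define fP where "fP = (\<lambda>P t. if t \<in> {lo P..hi P} then f t else 0)"
  have ss: "{lo P..hi P} \<inter> {\<alpha>..\<beta>} = {lo P..hi P}" if "P \<in> S" for P
    using sub that by auto
  have fPi: "fP P integrable_on {\<alpha>..\<beta>}" if "P \<in> S" for P
  proof -
    have "f integrable_on {lo P..hi P}"
      by (rule integrable_on_subinterval[OF fi]) (use sub that in auto)
    then show ?thesis unfolding fP_def using integrable_restrict_Int ss[OF that] by metis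
  qed
  have fPint: "integral {\<alpha>..\<beta>} (fP P) = integral {lo P..hi P} f" if "P \<in> S" for P
    unfolding fP_def integral_restrict_Int ss[OF that] ..
  have "integral {\<alpha>..\<beta>} f \<le> integral {\<alpha>..\<beta>} (\<lambda>t. \<Sum>P\<in>S. fP P t)"
  proof (rule integral_le[OF fi])
    show "(\<lambda>t. \<Sum>P\<in>S. fP P t) integrable_on {\<alpha>..\<beta>}"
      by (rule integrable_sum) (use fPi fin in auto)
    fix t assume t: "t \<in> {\<alpha>..\<beta>}"
    then obtain P0 where P0: "P0 \<in> S" "t \<in> {lo P0..hi P0}" using cov by blast
    have "f t = fP P0 t" using P0 unfolding fP_def by simp
    also have "\<dots> \<le> (\<Sum>P\<in>S. fP P t)"
      by (rule member_le_sum) (use P0 fin f0 t in \<open>auto simp: fP_def\<close>)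
    finally show "f t \<le> (\<Sum>P\<in>S. fP P t)" .
  qed
  also have "\<dots> = (\<Sum>P\<in>S. integral {\<alpha>..\<beta>} (fP P))"
    by (rule integral_sum) (use fPi fin in auto)
  also have "\<dots> = (\<Sum>P\<in>S. integral {lo P..hi P} f)"
    by (rule sum.cong) (use fPint in auto)
  finally show ?thesis .
qed

lemma denom_core:
  fixes x :: "nat \<Rightarrow> real"
  assumes mono: "\<forall>i<m. x i \<le> x (Suc i)"
    and pq: "p < q" "q < m" "pp \<le> p" "q \<le> qq" "qq \<le> m"
    and b0: "0 < b" and Fb1: "\<forall>i<p. b \<le> x q - x i" and Fb2: "\<forall>i\<in>{q+1..m-1}. b \<le> x i - x p"
    and tq: "x qq - x pp \<le> t" and c: "\<And>F. b \<le> F \<Longrightarrow> F + t \<le> c * F"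
  shows "qq < m \<Longrightarrow> ((\<Prod>i<pp. x qq - x i) * (\<Prod>i\<in>{qq+1..m}. x i - x pp)) * b ^ ((p - pp) + (qq - q))
           \<le> (x m - x 0) * c ^ (pp + (m - 1 - qq)) * ((\<Prod>i<p. x q - x i) * (\<Prod>i\<in>{q+1..m-1}. x i - x p))"
    and "qq = m \<Longrightarrow> ((\<Prod>i<pp. x qq - x i) * (\<Prod>i\<in>{qq+1..m}. x i - x pp)) * b ^ ((p - pp) + (m - 1 - q))
           \<le> c ^ pp * ((\<Prod>i<p. x q - x i) * (\<Prod>i\<in>{q+1..m-1}. x i - x p))"
proof -
  have mx: "x i \<le> x j" if "i \<le> j" "j \<le> m" for i j using mono_x[OF mono that] .
  have c0: "0 \<le> c"
  proof -
    have "b + t \<le> c * b" using c[of b] by simp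
    moreover have "0 \<le> t" using tq mx[of pp qq] pq by linarith
    ultimately have "0 < c * b" using b0 by linarith
    then show ?thesis using b0 by (simp add: zero_less_mult_iff)
  qed
  have P1: "(\<Prod>i<pp. x qq - x i) * b ^ (p - pp) \<le> c ^ pp * (\<Prod>i<p. x q - x i)"
  proof -
    have "(\<Prod>i<pp. x qq - x i) * b ^ (card {..<p} - card {..<pp}) \<le> c ^ (card {..<pp}) * (\<Prod>i<p. x q - x i)"
    proof (rule prodbound)
      show "{..<pp} \<subseteq> {..<p}" using pq by auto
      show "\<forall>i\<in>{..<p}. b \<le> x q - x i" using Fb1 by auto
      show "\<forall>i\<in>{..<pp}. 0 \<le> x qq - x i \<and> x qq - x i \<le> c * (x q - x i)"
      proof
        fix i assume i: "i \<in> {..<pp}"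
        have "x i \<le> x qq" using i pq by (intro mx) auto
        moreover have "x qq - x i \<le> (x q - x i) + t"
          using tq mx[of pp q] pq by linarith
        moreover have "(x q - x i) + t \<le> c * (x q - x i)" using c Fb1 i pq by auto
        ultimately show "0 \<le> x qq - x i \<and> x qq - x i \<le> c * (x q - x i)" by linarith
      qed
    qed (use b0 in auto)
    then show ?thesis by simp
  qed
  have G1: "0 \<le> (\<Prod>i<pp. x qq - x i)" by (rule prod_nonneg) (use pq mx in auto)
  have F1: "0 \<le> (\<Prod>i<p. x q - x i)" by (rule prod_nonneg) (use pq mx in auto)
  have F2: "0 \<le> (\<Prod>i\<in>{q+1..m-1}. x i - x p)" by (rule prod_nonneg) (use pq mx in auto)
  have bJ0: "0 \<le> b ^ n" for n using b0 by simp
  show "qq < m \<Longrightarrow> ((\<Prod>i<pp. x qq - x i) * (\<Prod>i\<in>{qq+1..m}. x i - x pp)) * b ^ ((p - pp) + (qq - q))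
           \<le> (x m - x 0) * c ^ (pp + (m - 1 - qq)) * ((\<Prod>i<p. x q - x i) * (\<Prod>i\<in>{q+1..m-1}. x i - x p))"
  proof -
    assume qm: "qq < m"
    have ins: "{qq+1..m} = insert m {qq+1..m-1}" using qm by auto
    have D2: "(\<Prod>i\<in>{qq+1..m}. x i - x pp) = (x m - x pp) * (\<Prod>i\<in>{qq+1..m-1}. x i - x pp)"
      unfolding ins by (subst prod.insert) auto
    have P2: "(\<Prod>i\<in>{qq+1..m-1}. x i - x pp) * b ^ (qq - q) \<le> c ^ (m - 1 - qq) * (\<Prod>i\<in>{q+1..m-1}. x i - x p)"
    proof -
      have "(\<Prod>i\<in>{qq+1..m-1}. x i - x pp) * b ^ (card {q+1..m-1} - card {qq+1..m-1})
             \<le> c ^ (card {qq+1..m-1}) * (\<Prod>i\<in>{q+1..m-1}. x i - x p)"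
      proof (rule prodbound)
        show "{qq+1..m-1} \<subseteq> {q+1..m-1}" using pq by auto
        show "\<forall>i\<in>{q+1..m-1}. b \<le> x i - x p" using Fb2 by auto
        show "\<forall>i\<in>{qq+1..m-1}. 0 \<le> x i - x pp \<and> x i - x pp \<le> c * (x i - x p)"
        proof
          fix i assume i: "i \<in> {qq+1..m-1}"
          have "x pp \<le> x i" using i pq by (intro mx) auto
          moreover have "x i - x pp \<le> (x i - x p) + t"
            using tq mx[of p qq] pq by linarith
          moreover have "(x i - x p) + t \<le> c * (x i - x p)" using c Fb2 i pq by auto
          ultimately show "0 \<le> x i - x pp \<and> x i - x pp \<le> c * (x i - x p)" by linarith
        qed
      qed (use b0 in auto)
      moreover have "card {q+1..m-1} - card {qq+1..m-1} = qq - q" using pq qm by simp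
      moreover have "card {qq+1..m-1} = m - 1 - qq" by simp
      ultimately show ?thesis by simp
    qed
    have G2: "0 \<le> (\<Prod>i\<in>{qq+1..m-1}. x i - x pp)" by (rule prod_nonneg) (use pq mx in auto)
    have Lm: "0 \<le> x m - x pp" "x m - x pp \<le> x m - x 0" using mx[of pp m] mx[of 0 pp] pq by auto
    have "((\<Prod>i<pp. x qq - x i) * (\<Prod>i\<in>{qq+1..m}. x i - x pp)) * b ^ ((p - pp) + (qq - q))
        = (x m - x pp) * (((\<Prod>i<pp. x qq - x i) * b ^ (p - pp)) * ((\<Prod>i\<in>{qq+1..m-1}. x i - x pp) * b ^ (qq - q)))"
      unfolding D2 power_add by (simp add: algebra_simps)
    also have "\<dots> \<le> (x m - x 0) * ((c ^ pp * (\<Prod>i<p. x q - x i)) * (c ^ (m - 1 - qq) * (\<Prod>i\<in>{q+1..m-1}. x i - x p)))"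
      apply (rule mult_mono[OF Lm(2)])
        apply (rule mult_mono[OF P1 P2])
      using G1 G2 F1 F2 c0 bJ0 Lm by (auto intro!: mult_nonneg_nonneg)
    also have "\<dots> = (x m - x 0) * c ^ (pp + (m - 1 - qq)) * ((\<Prod>i<p. x q - x i) * (\<Prod>i\<in>{q+1..m-1}. x i - x p))"
      by (simp add: power_add algebra_simps)
    finally show ?thesis .
  qed
  show "qq = m \<Longrightarrow> ((\<Prod>i<pp. x qq - x i) * (\<Prod>i\<in>{qq+1..m}. x i - x pp)) * b ^ ((p - pp) + (m - 1 - q))
           \<le> c ^ pp * ((\<Prod>i<p. x q - x i) * (\<Prod>i\<in>{q+1..m-1}. x i - x p))"
  proof -
    assume qm: "qq = m"
    have P2: "b ^ (m - 1 - q) \<le> (\<Prod>i\<in>{q+1..m-1}. x i - x p)"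
    proof -
      have "(\<Prod>i\<in>{}. x i - x p) * b ^ (card {q+1..m-1} - card {}) \<le> 1 ^ (card {}) * (\<Prod>i\<in>{q+1..m-1}. x i - x p)"
        using prodbound[where A="{q+1..m-1}" and B="{}" and c=1 and f="\<lambda>i. x i - x p" and g="\<lambda>i. x i - x p" and b=b] b0 Fb2 by simp
      moreover have "card {q+1..m-1} = m - 1 - q" using pq by simp
      ultimately show ?thesis by simp
    qed
    have "((\<Prod>i<pp. x qq - x i) * (\<Prod>i\<in>{qq+1..m}. x i - x pp)) * b ^ ((p - pp) + (m - 1 - q))
        = ((\<Prod>i<pp. x qq - x i) * b ^ (p - pp)) * b ^ (m - 1 - q)"
      using qm by (simp add: power_add algebra_simps)
    also have "\<dots> \<le> (c ^ pp * (\<Prod>i<p. x q - x i)) * (\<Prod>i\<in>{q+1..m-1}. x i - x p)"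
      by (rule mult_mono[OF P1 P2]) (use F1 c0 bJ0 in auto)
    finally show ?thesis by (simp add: algebra_simps)
  qed
qed

lemma denom_bound:
  fixes x :: "nat \<Rightarrow> real"
  assumes mono: "\<forall>i<m. x i \<le> x (Suc i)"
    and mk: "m = r + k"
    and pq: "p + r + 1 \<le> q" "q < m" "pp \<le> p" "q \<le> qq" "qq \<le> m"
    and b0: "0 < b" and Fb1: "\<forall>i<p. b \<le> x q - x i" and Fb2: "\<forall>i\<in>{q+1..m-1}. b \<le> x i - x p"
    and tq: "x qq - x pp \<le> t" and t0: "0 < t" and tL: "t \<le> 2 * (x m - x 0)"
  defines "Dn \<equiv> (\<Prod>i<pp. x qq - x i) * (\<Prod>i\<in>{qq+1..m}. x i - x pp)"
    and "Do \<equiv> (\<Prod>i<p. x q - x i) * (\<Prod>i\<in>{q+1..m-1}. x i - x p)"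
  shows "t \<le> b \<Longrightarrow> Dn * t ^ ((qq - pp) - (q - p)) \<le> 2 ^ (k+1) * (x m - x 0) * Do"
    and "b \<le> t \<Longrightarrow> Dn * b ^ (k - (q - p - r + 1)) * t ^ (qq - pp - r + 1) \<le> 2 ^ (k+1) * (x m - x 0) * Do * t ^ k"
proof -
  have mx: "x i \<le> x j" if "i \<le> j" "j \<le> m" for i j using mono_x[OF mono that] .
  have pq': "p < q" using pq by simp
  have L0: "0 \<le> x m - x 0" using mx[of 0 m] by simp
  have Dn0: "0 \<le> Dn" unfolding Dn_def
    by (intro mult_nonneg_nonneg prod_nonneg) (use pq mx in auto)
  have Do0: "0 \<le> Do" unfolding Do_def
    by (intro mult_nonneg_nonneg prod_nonneg) (use pq mx in auto)
  have ppk: "pp + (m - 1 - qq) \<le> k" "pp \<le> k" using pq mk by auto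
  note core = denom_core[OF mono pq' pq(2-5) b0 Fb1 Fb2 tq, folded Dn_def Do_def]
  show "t \<le> b \<Longrightarrow> Dn * t ^ ((qq - pp) - (q - p)) \<le> 2 ^ (k+1) * (x m - x 0) * Do"
  proof -
    assume tb: "t \<le> b"
    have c: "F + t \<le> 2 * F" if "b \<le> F" for F using that tb by simp
    have p2: "(2::real) ^ n \<le> 2 ^ (k+1)" if "n \<le> k" for n by (rule power_increasing) (use that in auto)
    show ?thesis
    proof (cases "qq < m")
      case True
      have e: "(qq - pp) - (q - p) = (p - pp) + (qq - q)" using pq by simp
      have "Dn * t ^ ((qq - pp) - (q - p)) \<le> Dn * b ^ ((p - pp) + (qq - q))"
        unfolding e by (intro mult_left_mono power_mono) (use tb t0 Dn0 in auto)
      also have "\<dots> \<le> (x m - x 0) * 2 ^ (pp + (m - 1 - qq)) * Do"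
        using core(1)[OF c True] .
      also have "\<dots> \<le> (x m - x 0) * 2 ^ (k+1) * Do"
        by (intro mult_right_mono mult_left_mono p2 ppk) (use L0 Do0 in auto)
      finally show ?thesis by (simp add: algebra_simps)
    next
      case False
      then have qm: "qq = m" using pq by simp
      have e: "(qq - pp) - (q - p) = Suc ((p - pp) + (m - 1 - q))" using pq qm by simp
      have "Dn * t ^ ((qq - pp) - (q - p)) = (Dn * t ^ ((p - pp) + (m - 1 - q))) * t"
        unfolding e by (simp add: algebra_simps)
      also have "\<dots> \<le> (Dn * b ^ ((p - pp) + (m - 1 - q))) * t"
        by (intro mult_right_mono mult_left_mono power_mono) (use tb t0 Dn0 in auto)
      also have "\<dots> \<le> (2 ^ pp * Do) * t"
        by (intro mult_right_mono core(2)[OF c qm]) (use t0 in auto)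
      also have "\<dots> \<le> (2 ^ pp * Do) * (2 * (x m - x 0))"
        by (intro mult_left_mono tL) (use Do0 in auto)
      also have "\<dots> = 2 ^ (pp + 1) * (x m - x 0) * Do" by (simp add: algebra_simps)
      also have "\<dots> \<le> 2 ^ (k + 1) * (x m - x 0) * Do"
        by (intro mult_right_mono power_increasing) (use ppk L0 Do0 in auto)
      finally show ?thesis .
    qed
  qed
  show "b \<le> t \<Longrightarrow> Dn * b ^ (k - (q - p - r + 1)) * t ^ (qq - pp - r + 1) \<le> 2 ^ (k+1) * (x m - x 0) * Do * t ^ k"
  proof -
    assume tb: "b \<le> t"
    have c: "F + t \<le> (2 * t / b) * F" if "b \<le> F" for F
    proof -
      have "F * b + t * b \<le> 2 * t * F"
      proof -
        have "F * b \<le> t * F" using tb that b0 by (simp add: mult_right_mono mult.commute)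
        moreover have "t * b \<le> t * F" using that t0 by (intro mult_left_mono) auto
        ultimately show ?thesis by simp
      qed
      then show ?thesis using b0 by (simp add: field_simps)
    qed
    have bb: "(2 * t / b) ^ n * b ^ n = 2 ^ n * t ^ n" for n
      using b0 by (simp add: power_mult_distrib power_divide)
    show ?thesis
    proof (cases "qq < m")
      case True
      define N where "N = pp + (m - 1 - qq)"
      have e1: "k - (q - p - r + 1) = ((p - pp) + (qq - q)) + N" using pq mk True unfolding N_def by simp
      have e2: "N + (qq - pp - r + 1) = k" using pq mk True unfolding N_def by simp
      have "Dn * b ^ (k - (q - p - r + 1)) = (Dn * b ^ ((p - pp) + (qq - q))) * b ^ N"
        unfolding e1 by (simp add: power_add algebra_simps)
      also have "\<dots> \<le> ((x m - x 0) * (2 * t / b) ^ N * Do) * b ^ N"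
        by (intro mult_right_mono core(1)[OF c True, folded N_def]) (use b0 in auto)
      also have "\<dots> = (x m - x 0) * 2 ^ N * t ^ N * Do"
        using bb[of N] by (simp add: algebra_simps)
      finally have A: "Dn * b ^ (k - (q - p - r + 1)) \<le> (x m - x 0) * 2 ^ N * t ^ N * Do" .
      have "Dn * b ^ (k - (q - p - r + 1)) * t ^ (qq - pp - r + 1)
          \<le> ((x m - x 0) * 2 ^ N * t ^ N * Do) * t ^ (qq - pp - r + 1)"
        by (intro mult_right_mono A) (use t0 in auto)
      also have "\<dots> = (x m - x 0) * 2 ^ N * Do * t ^ k"
        unfolding e2[symmetric] by (simp add: power_add algebra_simps)
      also have "\<dots> \<le> (x m - x 0) * 2 ^ (k+1) * Do * t ^ k"
        by (intro mult_right_mono mult_left_mono power_increasing) (use N_def ppk L0 Do0 t0 in auto)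
      finally show ?thesis by (simp add: algebra_simps)
    next
      case False
      then have qm: "qq = m" using pq by simp
      have e1: "k - (q - p - r + 1) = ((p - pp) + (m - 1 - q)) + pp" using pq mk qm by simp
      have e2: "pp + (qq - pp - r + 1) = k + 1" using pq mk qm by simp
      have "Dn * b ^ (k - (q - p - r + 1)) = (Dn * b ^ ((p - pp) + (m - 1 - q))) * b ^ pp"
        unfolding e1 by (simp add: power_add algebra_simps)
      also have "\<dots> \<le> ((2 * t / b) ^ pp * Do) * b ^ pp"
        by (intro mult_right_mono core(2)[OF c qm]) (use b0 in auto)
      also have "\<dots> = 2 ^ pp * t ^ pp * Do"
        using bb[of pp] by (simp add: algebra_simps)
      finally have A: "Dn * b ^ (k - (q - p - r + 1)) \<le> 2 ^ pp * t ^ pp * Do" .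
      have "Dn * b ^ (k - (q - p - r + 1)) * t ^ (qq - pp - r + 1)
          \<le> (2 ^ pp * t ^ pp * Do) * t ^ (qq - pp - r + 1)"
        by (intro mult_right_mono A) (use t0 in auto)
      also have "\<dots> = 2 ^ pp * Do * t ^ k * t"
      proof -
        have "t ^ pp * t ^ (qq - pp - r + 1) = t ^ k * t"
          unfolding power_add[symmetric] e2 by simp
        then show ?thesis by (simp add: algebra_simps)
      qed
      also have "\<dots> \<le> 2 ^ pp * Do * t ^ k * (2 * (x m - x 0))"
        by (intro mult_left_mono tL) (use Do0 t0 in auto)
      also have "\<dots> = 2 ^ (pp + 1) * (x m - x 0) * Do * t ^ k" by (simp add: algebra_simps)
      also have "\<dots> \<le> 2 ^ (k + 1) * (x m - x 0) * Do * t ^ k"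
        by (intro mult_right_mono power_increasing) (use ppk L0 Do0 t0 in auto)
      finally show ?thesis .
    qed
  qed
qed

lemma frac_cross:
  fixes x y z w :: real
  assumes "0 < y" "0 < z" "x * z \<le> w * y"
  shows "x / y \<le> w / z"
  using assms by (simp add: field_simps)

lemma one_pair:
  fixes x :: "nat \<Rightarrow> real" and \<phi> \<omega> :: "real \<Rightarrow> real"
  assumes k2: "2 \<le> k" and mk: "m = r + k"
    and mono: "\<forall>i<m. x i \<le> x (Suc i)"
    and strict: "\<forall>j. j + r + 1 \<le> m \<longrightarrow> x j < x (j + r + 1)"
    and phi: "inPhi \<phi>" and om: "inPhi \<omega>"
    and h1: "\<forall>t\<in>{0<..(x m - x 0)}.
        \<phi> t \<le> t ^ (k - 1) * integral {t..2 * (x m - x 0)} (\<lambda>u. u powi (- int k) * \<omega> u)"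
    and h2: "\<forall>t\<in>{(x m - x 0)..2 * (x m - x 0)}. \<phi> t \<le> \<omega> t"
    and PQ: "(p, q) \<in> Qset (m - 1) r"
  shows "Lambda_pqr x (m - 1) p q r \<phi> \<le> 2 ^ (k + 2) * (real k + 1) ^ 2 * (x m - x 0) * Lambda r x m \<omega>"
proof -
  define L where "L = x m - x 0"
  have mx: "x i \<le> x j" if "i \<le> j" "j \<le> m" for i j using mono_x[OF mono that] .
  have pq: "p + r + 1 \<le> q" "q \<le> m - 1" using PQ by (auto simp: Qset_def)
  have qm: "q < m" using pq k2 mk by simp
  define a where "a = x q - x p"
  have a0: "0 < a"
  proof -
    have "x p < x (p + r + 1)" using strict pq qm by simp
    also have "\<dots> \<le> x q" using pq qm by (intro mx) auto
    finally show ?thesis unfolding a_def by simp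
  qed
  have L0: "0 < L"
  proof -
    have "x 0 < x (0 + r + 1)" using strict[rule_format, of 0] mk k2 by simp
    also have "\<dots> \<le> x m" using mk k2 by (intro mx) auto
    finally show ?thesis unfolding L_def by simp
  qed
  define b where "b = dpq x (m - 1) p q"
  define e where "e = q - p - r + 1"
  define s where "s = k - e"
  have se: "s + e = k" "1 \<le> e" using pq mk qm unfolding s_def e_def by auto
  define Do where "Do = (\<Prod>i<p. x q - x i) * (\<Prod>i\<in>{q+1..m-1}. x i - x p)"
  have b_facts: "a \<le> b" "b \<le> 2 * L" "\<forall>i<p. b \<le> x q - x i" "\<forall>i\<in>{q+1..m-1}. b \<le> x i - x p"
     "s = 0 \<longrightarrow> b \<le> 2 * a"
  proof -
    define Y1 where "Y1 = (if q < m - 1 then x (Suc q) else x (m-1) + (x (m-1) - x 0))"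
    define Y2 where "Y2 = (if 0 < p then x (p - 1) else x 0 - (x (m-1) - x 0))"
    have y1: "yext x (m-1) (int q + 1) = Y1"
    proof (cases "q < m - 1")
      case True then show ?thesis unfolding Y1_def by (simp add: yext_Suc_lt)
    next
      case False then have "q = m - 1" using pq by simp
      then show ?thesis unfolding Y1_def using yext_Suc_eq[of x "m-1"] by simp
    qed
    have y2: "yext x (m-1) (int p - 1) = Y2"
    proof (cases "0 < p")
      case True then show ?thesis unfolding Y2_def using pq by (simp add: yext_pred_pos)
    next
      case False then show ?thesis unfolding Y2_def using yext_pred_0[of x "m-1"] by simp
    qed
    have bd: "b = min (Y1 - x p) (x q - Y2)" unfolding b_def dpq_def y1 y2 ..
    have m1: "x 0 \<le> x (m-1)" "x (m-1) \<le> x m" "x 0 \<le> x p" "x p \<le> x q" "x q \<le> x (m-1)"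
      using pq qm by (auto intro!: mx)
    have Y1q: "x q \<le> Y1"
    proof (cases "q < m - 1")
      case True then show ?thesis unfolding Y1_def using mx[of q "Suc q"] qm by simp
    next
      case False then show ?thesis unfolding Y1_def using m1 by simp
    qed
    have Y2p: "Y2 \<le> x p"
    proof (cases "0 < p")
      case True then show ?thesis unfolding Y2_def using mx[of "p-1" p] pq qm by simp
    next
      case False then show ?thesis unfolding Y2_def using m1 by simp
    qed
    show "a \<le> b" unfolding bd a_def using Y1q Y2p by simp
    have Y1L: "Y1 - x p \<le> 2 * L"
    proof (cases "q < m - 1")
      case True then show ?thesis unfolding Y1_def L_def using mx[of "Suc q" m] mx[of 0 m] m1 qm by simp
    next
      case False then show ?thesis unfolding Y1_def L_def using m1 by simp
    qed
    show "b \<le> 2 * L" unfolding bd using Y1L by simp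
    show "\<forall>i<p. b \<le> x q - x i"
    proof (intro allI impI)
      fix i assume i: "i < p"
      then have "Y2 = x (p - 1)" unfolding Y2_def by simp
      moreover have "x i \<le> x (p - 1)" using i pq qm by (intro mx) auto
      ultimately show "b \<le> x q - x i" unfolding bd by simp
    qed
    show "\<forall>i\<in>{q+1..m-1}. b \<le> x i - x p"
    proof
      fix i assume i: "i \<in> {q+1..m-1}"
      then have "Y1 = x (Suc q)" unfolding Y1_def by auto
      moreover have "x (Suc q) \<le> x i" using i qm by (intro mx) auto
      ultimately show "b \<le> x i - x p" unfolding bd by simp
    qed
    show "s = 0 \<longrightarrow> b \<le> 2 * a"
    proof
      assume "s = 0"
      then have "e = k" using se by simp
      then have pq0: "p = 0" "q = m - 1" using pq mk unfolding e_def by auto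
      then have "Y1 - x p = 2 * a" unfolding Y1_def a_def by simp
      then show "b \<le> 2 * a" unfolding bd by simp
    qed
  qed
  have b0: "0 < b" using a0 b_facts by simp
  have Do0: "0 < Do" unfolding Do_def
    by (intro mult_pos_pos prod_pos) (use b_facts b0 in force)+
  have om0: "0 \<le> \<omega> t" if "0 \<le> t" for t
    using om that unfolding inPhi_def by (metis atLeast_iff mono_onD order_refl)
  have omc: "continuous_on {0..} \<omega>" using om unfolding inPhi_def by simp
  have phic: "continuous_on {0..} \<phi>" using phi unfolding inPhi_def by simp
  define M where "M = Lambda r x m \<omega>"
  define S where "S = {..p} \<times> {q..m}"
  define lo where "lo = (\<lambda>P. x (snd P) - x (fst P))"
  define hi where "hi = (\<lambda>P. dpq x m (fst P) (snd P))"
  define Dn where "Dn = (\<lambda>P. (\<Prod>i<fst P. x (snd P) - x i) * (\<Prod>i\<in>{snd P+1..m}. x i - x (fst P)))"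
  define e' where "e' = (\<lambda>P. snd P - fst P - r + 1)"
  have PP: "a \<le> lo P" "hi P \<le> 2 * L" "0 < Dn P"
    "Lambda_pqr x m (fst P) (snd P) r \<omega> = integral {lo P..hi P} (\<lambda>t. 1 / t ^ e' P * \<omega> t) / Dn P"
    "0 \<le> Lambda_pqr x m (fst P) (snd P) r \<omega>" "Lambda_pqr x m (fst P) (snd P) r \<omega> \<le> M"
    if P: "P \<in> S" for P
  proof -
    obtain pp qq where P': "P = (pp, qq)" by force
    have r: "pp \<le> p" "q \<le> qq" "qq \<le> m" using P unfolding S_def P' by auto
    have PQ': "P \<in> Qset m r" using r pq unfolding P' Qset_def by auto
    have xs: "x pp \<le> x p" "x q \<le> x qq" "x 0 \<le> x pp" "x pp \<le> x qq" using r qm pq by (auto intro!: mx)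
    show lo1: "a \<le> lo P" unfolding lo_def a_def P' using xs by simp
    show "hi P \<le> 2 * L"
    proof -
      have "hi P \<le> yext x m (int qq + 1) - x pp" unfolding hi_def dpq_def P' by simp
      also have "\<dots> \<le> 2 * L"
      proof (cases "qq < m")
        case True
        then show ?thesis using mx[of "Suc qq" m] xs L0 unfolding L_def by (simp add: yext_Suc_lt)
      next
        case False
        then have "qq = m" using r by simp
        then show ?thesis using yext_Suc_eq[of x m] xs unfolding L_def by simp
      qed
      finally show ?thesis .
    qed
    show Dn0: "0 < Dn P" unfolding Dn_def P' fst_conv snd_conv
    proof (intro mult_pos_pos prod_pos ballI)
      fix i assume "i \<in> {..<pp}"
      then have "x i \<le> x pp" using r qm pq by (intro mx) auto
      then show "0 < x qq - x i" using lo1 a0 unfolding lo_def P' by simp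
    next
      fix i assume "i \<in> {qq+1..m}"
      then have "x qq \<le> x i" by (intro mx) auto
      then show "0 < x i - x pp" using lo1 a0 unfolding lo_def P' by simp
    qed
    have ppq: "pp + r + 1 \<le> qq" using r pq by simp
    show eq: "Lambda_pqr x m (fst P) (snd P) r \<omega> = integral {lo P..hi P} (\<lambda>t. 1 / t ^ e' P * \<omega> t) / Dn P"
    proof -
      have "(\<lambda>u. u powi (int pp + int r - int qq - 1) * \<omega> u) = (\<lambda>u. 1 / u ^ e' P * \<omega> u)"
        unfolding e'_def P' using powi_neg_nat[OF ppq] by auto
      then show ?thesis unfolding Lambda_pqr_def lo_def hi_def Dn_def P' by simp
    qed
    show "0 \<le> Lambda_pqr x m (fst P) (snd P) r \<omega>"
      unfolding eq
    proof (intro divide_nonneg_pos Dn0 integral_nonneg)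
      have "continuous_on {lo P..hi P} (\<lambda>t. 1 / t ^ e' P * \<omega> t)"
        by (intro continuous_intros continuous_on_subset[OF omc]) (use lo1 a0 in auto)
      then show "(\<lambda>t. 1 / t ^ e' P * \<omega> t) integrable_on {lo P..hi P}"
        by (rule integrable_continuous_interval)
      fix t assume "t \<in> {lo P..hi P}"
      then show "0 \<le> 1 / t ^ e' P * \<omega> t" using lo1 a0 om0 by simp
    qed
    show "Lambda_pqr x m (fst P) (snd P) r \<omega> \<le> M"
    proof -
      have fin: "finite (Qset m r)"
        by (rule finite_subset[of _ "{..m} \<times> {..m}"]) (auto simp: Qset_def)
      have "Lambda_pqr x m (fst P) (snd P) r \<omega> \<in> (\<lambda>(p, q). Lambda_pqr x m p q r \<omega>) ` Qset m r"
        using PQ' unfolding P' by force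
      then show ?thesis unfolding M_def Lambda_def by (intro Max_ge) (use fin in auto)
    qed
  qed
  define f where "f = (\<lambda>t::real. min t b ^ s / t ^ k * \<omega> t)"
  have fcA0: "continuous_on {a..2*L} f"
    unfolding f_def by (intro continuous_intros continuous_on_subset[OF omc]) (use a0 in auto)
  have f00: "\<forall>t\<in>{a..2*L}. 0 \<le> f t"
    unfolding f_def using a0 om0 b0 by auto
  have fint: "f integrable_on {c..d}" if "a \<le> c" "d \<le> 2 * L" for c d
    by (rule integrable_continuous_interval, rule continuous_on_subset[OF fcA0]) (use that in auto)
  have fnn: "0 \<le> integral {c..d} f" if "a \<le> c" "d \<le> 2 * L" for c d
    by (rule integral_nonneg[OF fint[OF that]]) (use f00 that in auto)
  have fsub: "integral {c..d} f \<le> integral {a..2*L} f" if "a \<le> c" "d \<le> 2 * L" for c d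
    by (rule integral_subset_le) (use fint[OF that] fint[OF order_refl order_refl] f00 that in auto)
  have bL: "b \<le> 2 * L" using b_facts by simp
  have kap1: "f t = 1 / t ^ e * \<omega> t" if "0 < t" "t \<le> b" for t
  proof -
    have "t ^ k = t ^ s * t ^ e" unfolding se(1)[symmetric] power_add ..
    then show ?thesis unfolding f_def using that by (simp add: min_def)
  qed
  have kap2: "f t = b ^ s / t ^ k * \<omega> t" if "b \<le> t" for t
    unfolding f_def using that by (simp add: min_def)
  define g where "g = (\<lambda>u::real. 1 / u ^ k * \<omega> u)"
  have gc: "continuous_on {a..2*L} g"
    unfolding g_def by (intro continuous_intros continuous_on_subset[OF omc]) (use a0 in auto)
  have g0: "\<forall>t\<in>{a..2*L}. 0 \<le> g t" unfolding g_def using a0 om0 by auto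
  have tsg: "t ^ s * g t = 1 / t ^ e * \<omega> t" if "0 < t" for t
  proof -
    have "t ^ k = t ^ s * t ^ e" unfolding se(1)[symmetric] power_add ..
    then show ?thesis unfolding g_def using that by simp
  qed
  have h1': "\<phi> t \<le> t ^ (k - 1) * integral {t..2*L} g" if "0 < t" "t \<le> L" for t
  proof -
    have "(\<lambda>u. u powi (- int k) * \<omega> u) = g" unfolding g_def by (simp add: powi_neg_k)
    then show ?thesis using h1 that unfolding L_def by auto
  qed
  have h2': "\<phi> t \<le> \<omega> t" if "L \<le> t" "t \<le> 2 * L" for t
    using h2 that unfolding L_def by auto
  have Gc: "continuous_on {a..2*L} (\<lambda>u. integral {u..2*L} g)"
    by (rule indefinite_integral_continuous_1') (rule integrable_continuous_interval[OF gc])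
  have pre: "1 / u ^ e * \<phi> u \<le> u ^ s / u * integral {u..2*L} g" if "0 < u" "u \<le> L" for u
  proof -
    have "u ^ (k - 1) * u = u ^ s * u ^ e"
    proof -
      have "u ^ (k - 1) * u = u ^ Suc (k - 1)" by simp
      also have "Suc (k - 1) = s + e" using se k2 by simp
      finally show ?thesis by (simp add: power_add)
    qed
    then have id: "1 / u ^ e * u ^ (k - 1) = u ^ s / u" using that by (simp add: field_simps)
    have "1 / u ^ e * \<phi> u \<le> 1 / u ^ e * (u ^ (k - 1) * integral {u..2*L} g)"
      by (rule mult_left_mono[OF h1'[OF that]]) (use that in simp)
    also have "\<dots> = u ^ s / u * integral {u..2*L} g" using id by (simp add: mult.assoc[symmetric])
    finally show ?thesis .
  qed
  have phint: "(\<lambda>u. 1 / u ^ e * \<phi> u) integrable_on {c..d}" if "a \<le> c" for c d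
    by (rule integrable_continuous_interval)
       (intro continuous_intros continuous_on_subset[OF phic], use that a0 in auto)
  have omint: "(\<lambda>u. 1 / u ^ e * \<omega> u) integrable_on {c..d}" if "a \<le> c" for c d
    by (rule integrable_continuous_interval)
       (intro continuous_intros continuous_on_subset[OF omc], use that a0 in auto)
  have hardy_step: "integral {a..\<beta>} (\<lambda>u. 1 / u ^ e * \<phi> u)
      \<le> \<beta> ^ s * integral {\<beta>..2*L} g + integral {a..\<beta>} f"
    if "a \<le> \<beta>" "\<beta> \<le> L" "\<beta> \<le> b" "1 \<le> s \<or> \<beta> \<le> 2 * a" for \<beta>
  proof -
    have "integral {a..\<beta>} (\<lambda>u. 1 / u ^ e * \<phi> u) \<le> integral {a..\<beta>} (\<lambda>u. u ^ s / u * integral {u..2*L} g)"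
    proof (rule integral_le[OF phint])
      show "(\<lambda>u. u ^ s / u * integral {u..2*L} g) integrable_on {a..\<beta>}"
        by (rule integrable_continuous_interval)
           (intro continuous_intros continuous_on_subset[OF Gc], use that a0 L0 in auto)
      fix u assume "u \<in> {a..\<beta>}"
      then show "1 / u ^ e * \<phi> u \<le> u ^ s / u * integral {u..2*L} g" using that a0 by (intro pre) auto
    qed simp
    also have "\<dots> \<le> \<beta> ^ s * integral {\<beta>..2*L} g + integral {a..\<beta>} (\<lambda>t. t ^ s * g t)"
      by (rule hardy[OF a0 that(1) _ gc g0 that(4)]) (use that L0 in auto)
    also have "integral {a..\<beta>} (\<lambda>t. t ^ s * g t) = integral {a..\<beta>} f"
      by (rule integral_cong) (use tsg kap1 a0 that in auto)
    finally show ?thesis .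
  qed
  have stepA: "integral {a..b} (\<lambda>u. 1 / u ^ e * \<phi> u) \<le> 2 * integral {a..2*L} f"
  proof (cases "b \<le> L")
    case True
    have "integral {a..b} (\<lambda>u. 1 / u ^ e * \<phi> u) \<le> b ^ s * integral {b..2*L} g + integral {a..b} f"
      by (rule hardy_step) (use b_facts True in auto)
    also have "b ^ s * integral {b..2*L} g = integral {b..2*L} f"
    proof -
      have "b ^ s * integral {b..2*L} g = integral {b..2*L} (\<lambda>t. b ^ s * g t)" by simp
      also have "\<dots> = integral {b..2*L} f"
        by (rule integral_cong) (use kap2 in \<open>auto simp: g_def\<close>)
      finally show ?thesis .
    qed
    also have "integral {b..2*L} f + integral {a..b} f = integral {a..2*L} f"
      using Henstock_Kurzweil_Integration.integral_combine[OF b_facts(1) bL fint[OF order_refl order_refl]] by simp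
    finally show ?thesis using fnn[of a "2*L"] by simp
  next
    case False
    then have Lb: "L < b" by simp
    show ?thesis
    proof (cases "a \<le> L")
      case True
      have split: "integral {a..b} (\<lambda>u. 1 / u ^ e * \<phi> u)
          = integral {a..L} (\<lambda>u. 1 / u ^ e * \<phi> u) + integral {L..b} (\<lambda>u. 1 / u ^ e * \<phi> u)"
        using Henstock_Kurzweil_Integration.integral_combine[of a L b "\<lambda>u. 1 / u ^ e * \<phi> u", OF True _ phint[OF order_refl]] Lb by simp
      have A1: "integral {a..L} (\<lambda>u. 1 / u ^ e * \<phi> u) \<le> L ^ s * integral {L..2*L} g + integral {a..L} f"
        by (rule hardy_step) (use True Lb b_facts(5) in auto)
      have A2: "L ^ s * integral {L..2*L} g \<le> integral {L..2*L} f"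
      proof -
        have "L ^ s * integral {L..2*L} g = integral {L..2*L} (\<lambda>t. L ^ s * g t)" by simp
        also have "\<dots> \<le> integral {L..2*L} f"
        proof (rule integral_le)
          show "(\<lambda>t. L ^ s * g t) integrable_on {L..2 * L}"
            by (rule integrable_continuous_interval, intro continuous_intros,
                rule continuous_on_subset[OF gc]) (use True in auto)
          show "f integrable_on {L..2 * L}" using fint True by simp
          fix t assume t: "t \<in> {L..2*L}"
          have "L ^ s \<le> min t b ^ s" using t Lb L0 by (intro power_mono) auto
          then show "L ^ s * g t \<le> f t" unfolding f_def g_def
            using t L0 om0[of t] by (simp add: divide_right_mono mult_right_mono)
        qed
        finally show ?thesis .
      qed
      have A3: "integral {L..b} (\<lambda>u. 1 / u ^ e * \<phi> u) \<le> integral {L..2*L} f"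
      proof -
        have "integral {L..b} (\<lambda>u. 1 / u ^ e * \<phi> u) \<le> integral {L..b} (\<lambda>u. 1 / u ^ e * \<omega> u)"
        proof (rule integral_le[OF phint omint])
          fix u assume u: "u \<in> {L..b}"
          then show "1 / u ^ e * \<phi> u \<le> 1 / u ^ e * \<omega> u"
            using h2'[of u] bL L0 by (intro mult_left_mono) auto
        qed (use True in auto)
        also have "\<dots> = integral {L..b} f"
          by (rule integral_cong) (use kap1 L0 in auto)
        also have "\<dots> \<le> integral {L..2*L} f"
        proof -
          have "integral {L..b} f + integral {b..2*L} f = integral {L..2*L} f"
            using Henstock_Kurzweil_Integration.integral_combine[of L b "2*L" f, OF _ bL fint[OF True order_refl]] Lb by simp
          then show ?thesis using fnn[of b "2*L"] b_facts by simp
        qed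
        finally show ?thesis .
      qed
      have A4: "integral {a..L} f + integral {L..2*L} f = integral {a..2*L} f"
        using Henstock_Kurzweil_Integration.integral_combine[of a L "2*L" f, OF True _ fint[OF order_refl order_refl]] L0 by simp
      show ?thesis using split A1 A2 A3 A4 fnn[of a L] True L0 by linarith
    next
      case False
      have "integral {a..b} (\<lambda>u. 1 / u ^ e * \<phi> u) \<le> integral {a..b} (\<lambda>u. 1 / u ^ e * \<omega> u)"
      proof (rule integral_le[OF phint omint])
        fix u assume u: "u \<in> {a..b}"
        then show "1 / u ^ e * \<phi> u \<le> 1 / u ^ e * \<omega> u"
          using h2'[of u] bL False a0 by (intro mult_left_mono) auto
      qed auto
      also have "\<dots> = integral {a..b} f"
        by (rule integral_cong) (use kap1 a0 in auto)
      also have "\<dots> \<le> integral {a..2*L} f" using fsub[of a b] bL by simp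
      finally show ?thesis using fnn[of a "2*L"] by simp
    qed
  qed
  have fcA: "continuous_on {a..2*L} f"
    unfolding f_def by (intro continuous_intros continuous_on_subset[OF omc]) (use a0 in auto)
  have f0: "\<forall>t\<in>{a..2*L}. 0 \<le> f t"
    unfolding f_def using a0 om0 b0 by auto
  have finS: "finite S" unfolding S_def by simp
  have stepB: "integral {a..2*L} f \<le> (\<Sum>P\<in>S. integral {lo P..hi P} f)"
  proof (rule cover_integral[OF finS fcA f0])
    show "\<forall>P\<in>S. a \<le> lo P \<and> hi P \<le> 2 * L" using PP(1,2) by blast
    show "\<forall>t\<in>{a..2 * L}. \<exists>P\<in>S. t \<in> {lo P..hi P}"
    proof
      fix t assume t: "t \<in> {a..2 * L}"
      define T where "T = {P\<in>S. lo P \<le> t}"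
      define val where "val = (\<lambda>P::nat\<times>nat. snd P - fst P)"
      have finT: "finite T" unfolding T_def using finS by simp
      have pqT: "(p, q) \<in> T" unfolding T_def S_def lo_def using t qm unfolding a_def by auto
      define n0 where "n0 = Max (val ` T)"
      have "n0 \<in> val ` T" unfolding n0_def using finT pqT by (intro Max_in) auto
      then obtain P0 where P0: "P0 \<in> T" "val P0 = n0" by auto
      have P0max: "val P \<le> val P0" if "P \<in> T" for P
        unfolding P0(2) n0_def using finT that by (intro Max_ge) auto
      obtain pp qq where P0': "P0 = (pp, qq)" by force
      have r: "pp \<le> p" "q \<le> qq" "qq \<le> m" "x qq - x pp \<le> t"
        using P0(1) unfolding T_def S_def P0' lo_def by auto
      have ppqq: "pp < qq" using r pq by simp
      have xs: "x 0 \<le> x pp" "x pp \<le> x m" "x qq \<le> x m" "x 0 \<le> x qq" using r qm pq by (auto intro!: mx)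
      have inT: "(p', q') \<in> T" if "p' \<le> p" "q \<le> q'" "q' \<le> m" "x q' - x p' \<le> t" for p' q'
        using that unfolding T_def S_def lo_def by auto
      have part1: "t \<le> yext x m (int qq + 1) - x pp"
      proof (rule ccontr)
        assume lt: "\<not> ?thesis"
        show False
        proof (cases "qq < m")
          case True
          have "(pp, Suc qq) \<in> T" using lt True r by (intro inT) (auto simp: yext_Suc_lt)
          from P0max[OF this] show False using ppqq unfolding P0' val_def by simp
        next
          case False
          then have qqm: "qq = m" using r by simp
          have lt': "x m + (x m - x 0) - x pp < t" using lt yext_Suc_eq[of x m] qqm by simp
          show False
          proof (cases "pp = 0")
            case True then show False using lt' t unfolding L_def by simp
          next
            case False
            have "x 0 \<le> x (pp - 1)" by (intro mx) (use r qm pq in auto)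
            then have "(pp - 1, qq) \<in> T" using lt' False r qqm xs by (intro inT) auto
            from P0max[OF this] show False using ppqq False unfolding P0' val_def by simp
          qed
        qed
      qed
      have part2: "t \<le> x qq - yext x m (int pp - 1)"
      proof (rule ccontr)
        assume lt: "\<not> ?thesis"
        show False
        proof (cases "0 < pp")
          case True
          have "(pp - 1, qq) \<in> T" using lt True r ppqq by (intro inT) (auto simp: yext_pred_pos)
          from P0max[OF this] show False using ppqq True unfolding P0' val_def by simp
        next
          case False
          then have pp0: "pp = 0" by simp
          have lt': "x qq - (x 0 - (x m - x 0)) < t" using lt yext_pred_0[of x m] pp0 by simp
          show False
          proof (cases "qq = m")
            case True then show False using lt' t pp0 unfolding L_def by simp
          next
            case False
            have "x (Suc qq) \<le> x m" by (intro mx) (use r False in auto)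
            then have "(0, Suc qq) \<in> T" using lt' False r pp0 xs by (intro inT) auto
            from P0max[OF this] show False using ppqq pp0 unfolding P0' val_def by simp
          qed
        qed
      qed
      have "P0 \<in> S" using P0(1) unfolding T_def by simp
      moreover have "t \<in> {lo P0..hi P0}"
        using r(4) part1 part2 unfolding lo_def hi_def dpq_def P0' by simp
      ultimately show "\<exists>P\<in>S. t \<in> {lo P..hi P}" by blast
    qed
  qed
  have stepC: "integral {lo P..hi P} f \<le> 2 ^ (k+1) * L * Do * M" if P: "P \<in> S" for P
  proof -
    obtain pp qq where P': "P = (pp, qq)" by force
    have r: "pp \<le> p" "q \<le> qq" "qq \<le> m" using P unfolding S_def P' by auto
    define X where "X = 2 ^ (k+1) * L * Do"
    have X0: "0 \<le> X" unfolding X_def using L0 Do0 by simp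
    note PPs = PP[OF P]
    have fc: "continuous_on {lo P..hi P} f"
      unfolding f_def
      by (intro continuous_intros continuous_on_subset[OF omc]) (use PPs(1) a0 in auto)
    have gc: "continuous_on {lo P..hi P} (\<lambda>t. 1 / t ^ e' P * \<omega> t)"
      by (intro continuous_intros continuous_on_subset[OF omc]) (use PPs(1) a0 in auto)
    have pw: "min t b ^ s / t ^ k \<le> X / (Dn P * t ^ e' P)" if t: "t \<in> {lo P..hi P}" for t
    proof -
      have t0: "0 < t" using t PPs(1) a0 by simp
      have tq: "x qq - x pp \<le> t" using t unfolding lo_def P' by simp
      have tL: "t \<le> 2 * (x m - x 0)" using t PPs(2) unfolding L_def by simp
      note DB = denom_bound[OF mono mk pq(1) qm r(1) r(2) r(3) b0 b_facts(3) b_facts(4) tq t0 tL]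
      have Dn': "Dn P = (\<Prod>i<pp. x qq - x i) * (\<Prod>i\<in>{qq+1..m}. x i - x pp)"
        unfolding Dn_def P' by simp
      have Dnp: "0 < Dn P" using PPs(3) .
      define d where "d = (qq - pp) - (q - p)"
      have ee: "e' P = d + e" unfolding e'_def d_def e_def P' using pq r by simp
      show ?thesis
      proof (cases "t \<le> b")
        case True
        have T1: "Dn P * t ^ d \<le> X" using DB(1)[OF True] unfolding X_def Dn' d_def L_def Do_def .
        have "min t b ^ s / t ^ k = 1 / t ^ e"
        proof -
          have "t ^ k = t ^ s * t ^ e" unfolding se(1)[symmetric] power_add ..
          then show ?thesis using True t0 by (simp add: min_def)
        qed
        also have "\<dots> \<le> X / (Dn P * t ^ e' P)"
          by (rule frac_cross) (use t0 Dnp T1 in \<open>auto simp: ee power_add mult.assoc\<close>)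
        finally show ?thesis .
      next
        case False
        then have tb: "b \<le> t" by simp
        have T2: "Dn P * b ^ s * t ^ e' P \<le> X * t ^ k"
        proof -
          have "Dn P * b ^ s * t ^ e' P = ((\<Prod>i<pp. x qq - x i) * (\<Prod>i\<in>{qq+1..m}. x i - x pp)) * b ^ (k - (q - p - r + 1)) * t ^ (qq - pp - r + 1)"
            unfolding Dn_def s_def e_def e'_def P' by simp
          then show ?thesis using DB(2)[OF tb] unfolding X_def L_def Do_def by simp
        qed
        have "min t b ^ s / t ^ k = b ^ s / t ^ k" using tb by (simp add: min_def)
        also have "\<dots> \<le> X / (Dn P * t ^ e' P)"
          by (rule frac_cross) (use t0 Dnp T2 in \<open>auto simp: algebra_simps\<close>)
        finally show ?thesis .
      qed
    qed
    have "integral {lo P..hi P} f \<le> integral {lo P..hi P} (\<lambda>t. X / Dn P * (1 / t ^ e' P * \<omega> t))"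
    proof (rule integral_le)
      show "f integrable_on {lo P..hi P}" using fc integrable_continuous_interval by blast
      show "(\<lambda>t. X / Dn P * (1 / t ^ e' P * \<omega> t)) integrable_on {lo P..hi P}"
        by (rule integrable_continuous_interval) (intro continuous_intros gc)
      fix t assume t: "t \<in> {lo P..hi P}"
      have t0: "0 < t" using t PPs(1) a0 by simp
      have "f t = min t b ^ s / t ^ k * \<omega> t" unfolding f_def ..
      also have "\<dots> \<le> X / (Dn P * t ^ e' P) * \<omega> t"
        by (rule mult_right_mono[OF pw[OF t]]) (use om0 t0 in auto)
      also have "\<dots> = X / Dn P * (1 / t ^ e' P * \<omega> t)" by simp
      finally show "f t \<le> X / Dn P * (1 / t ^ e' P * \<omega> t)" .
    qed
    also have "\<dots> = X / Dn P * integral {lo P..hi P} (\<lambda>t. 1 / t ^ e' P * \<omega> t)"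
      by (rule integral_mult_right)
    also have "\<dots> = X * Lambda_pqr x m (fst P) (snd P) r \<omega>"
      unfolding PPs(4) by simp
    also have "\<dots> \<le> X * M" using PPs(6) X0 by (rule mult_left_mono)
    finally show ?thesis unfolding X_def .
  qed
  have cardS: "card S \<le> (k + 1) ^ 2"
  proof -
    have "card S = (p + 1) * (m + 1 - q)" unfolding S_def by (simp add: card_cartesian_product)
    also have "\<dots> \<le> (k + 1) * (k + 1)" using pq mk qm by (intro mult_le_mono) auto
    finally show ?thesis by (simp add: power2_eq_square)
  qed
  have M0: "0 \<le> M"
  proof -
    have "(p, q) \<in> S" using qm unfolding S_def by auto
    from PP(5,6)[OF this] show ?thesis by simp
  qed
  have old: "Lambda_pqr x (m - 1) p q r \<phi> = integral {a..b} (\<lambda>u. 1 / u ^ e * \<phi> u) / Do"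
  proof -
    have "(\<lambda>u. u powi (int p + int r - int q - 1) * \<phi> u) = (\<lambda>u. 1 / u ^ e * \<phi> u)"
      unfolding e_def using powi_neg_nat[OF pq(1)] by auto
    then show ?thesis unfolding Lambda_pqr_def a_def b_def Do_def by simp
  qed
  have "integral {a..b} (\<lambda>u. 1 / u ^ e * \<phi> u) \<le> 2 * (\<Sum>P\<in>S. 2 ^ (k+1) * L * Do * M)"
    using stepA stepB sum_mono[of S "\<lambda>P. integral {lo P..hi P} f", OF stepC] by linarith
  also have "\<dots> = 2 * card S * (2 ^ (k+1) * L * Do * M)" by simp
  also have "\<dots> \<le> 2 * (real k + 1) ^ 2 * (2 ^ (k+1) * L * Do * M)"
  proof -
    have "real (card S) \<le> (real k + 1) ^ 2" using cardS by (metis of_nat_1 of_nat_add of_nat_le_iff of_nat_power)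
    then show ?thesis using L0 Do0 M0 by (intro mult_right_mono mult_left_mono) auto
  qed
  finally have "integral {a..b} (\<lambda>u. 1 / u ^ e * \<phi> u) / Do \<le> 2 ^ (k + 2) * (real k + 1) ^ 2 * L * M"
    using Do0 by (simp add: divide_le_eq algebra_simps)
  then show ?thesis unfolding old L_def M_def .
qed

lemma Qset_fin: "finite (Qset n r)"
  by (rule finite_subset[of _ "{..n} \<times> {..n}"]) (auto simp: Qset_def)

lemma Lambda_pqr_cong:
  assumes "\<forall>i\<le>n. y i = y' i" "(p, q) \<in> Qset n r"
  shows "Lambda_pqr y n p q r \<phi> = Lambda_pqr y' n p q r \<phi>"
proof -
  have pq: "p \<le> n" "q \<le> n" using assms(2) by (auto simp: Qset_def)
  have ye: "yext y n i = yext y' n i" for i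
    unfolding yext_def using assms(1) by (auto simp: nat_le_iff)
  have d: "dpq y n p q = dpq y' n p q" unfolding dpq_def ye using assms(1) pq by simp
  have p1: "(\<Prod>i<p. y q - y i) = (\<Prod>i<p. y' q - y' i)"
    by (rule prod.cong) (use assms(1) pq in auto)
  have p2: "(\<Prod>i\<in>{q+1..n}. y i - y p) = (\<Prod>i\<in>{q+1..n}. y' i - y' p)"
    by (rule prod.cong) (use assms(1) pq in auto)
  show ?thesis unfolding Lambda_pqr_def d p1 p2 using assms(1) pq by simp
qed

lemma Lambda_cong:
  assumes "\<forall>i\<le>n. y i = y' i"
  shows "Lambda r y n \<phi> = Lambda r y' n \<phi>"
proof -
  have "(\<lambda>(p, q). Lambda_pqr y n p q r \<phi>) ` Qset n r = (\<lambda>(p, q). Lambda_pqr y' n p q r \<phi>) ` Qset n r"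
    by (rule image_cong) (use Lambda_pqr_cong[OF assms] in auto)
  then show ?thesis unfolding Lambda_def by simp
qed

lemma pqr_reflect:
  fixes y :: "nat \<Rightarrow> real"
  assumes "(p, q) \<in> Qset n r"
  shows "Lambda_pqr y n p q r \<phi> = Lambda_pqr (\<lambda>i. - y (n - i)) n (n - q) (n - p) r \<phi>"
proof -
  define y' where "y' = (\<lambda>i. - y (n - i))"
  have pq: "p + r + 1 \<le> q" "q \<le> n" using assms by (auto simp: Qset_def)
  have e1: "y' (n - p) - y' (n - q) = y q - y p" unfolding y'_def using pq by simp
  have ya: "yext y' n (int (n - p) + 1) = - yext y n (int p - 1)"
  proof (cases "p = 0")
    case True then show ?thesis unfolding yext_def y'_def by simp
  next
    case False
    then have "yext y' n (int (n - p) + 1) = y' (Suc (n - p))" using pq by (intro yext_Suc_lt) auto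
    moreover have "yext y n (int p - 1) = y (p - 1)" using False pq by (intro yext_pred_pos) auto
    moreover have "n - Suc (n - p) = p - 1" using False pq by simp
    ultimately show ?thesis unfolding y'_def by simp
  qed
  have yb: "yext y' n (int (n - q) - 1) = - yext y n (int q + 1)"
  proof (cases "q = n")
    case True then show ?thesis unfolding yext_def y'_def by simp
  next
    case False
    then have "yext y' n (int (n - q) - 1) = y' (n - q - 1)" using pq by (intro yext_pred_pos) auto
    moreover have "yext y n (int q + 1) = y (Suc q)" using False pq by (intro yext_Suc_lt) auto
    moreover have "n - (n - q - 1) = Suc q" using False pq by simp
    ultimately show ?thesis unfolding y'_def by simp
  qed
  have d: "dpq y' n (n - q) (n - p) = dpq y n p q"
    unfolding dpq_def ya yb using pq by (simp add: y'_def min.commute)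
  have ex: "int (n - q) + int r - int (n - p) - 1 = int p + int r - int q - 1" using pq by simp
  have p1: "(\<Prod>i<n - q. y' (n - p) - y' i) = (\<Prod>i\<in>{q+1..n}. y i - y p)"
    by (rule prod.reindex_bij_witness[of _ "\<lambda>i. n - i" "\<lambda>i. n - i"]) (use pq in \<open>auto simp: y'_def\<close>)
  have p2: "(\<Prod>i\<in>{n - p + 1..n}. y' i - y' (n - q)) = (\<Prod>i<p. y q - y i)"
    by (rule prod.reindex_bij_witness[of _ "\<lambda>i. n - i" "\<lambda>i. n - i"]) (use pq in \<open>auto simp: y'_def\<close>)
  show ?thesis
    unfolding Lambda_pqr_def y'_def[symmetric] e1 d ex p1 p2 by (simp add: mult.commute)
qed

lemma Lambda_reflect:
  fixes y :: "nat \<Rightarrow> real"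
  shows "Lambda r y n \<phi> = Lambda r (\<lambda>i. - y (n - i)) n \<phi>"
proof -
  define \<sigma> where "\<sigma> = (\<lambda>(p::nat, q::nat). (n - q, n - p))"
  have sQ: "\<sigma> ` Qset n r = Qset n r"
  proof
    show "\<sigma> ` Qset n r \<subseteq> Qset n r" unfolding \<sigma>_def Qset_def by auto
    show "Qset n r \<subseteq> \<sigma> ` Qset n r"
    proof
      fix P assume P: "P \<in> Qset n r"
      obtain p q where P': "P = (p, q)" by force
      have "(n - q, n - p) \<in> Qset n r" "\<sigma> (n - q, n - p) = P"
        using P unfolding P' \<sigma>_def Qset_def by auto
      then show "P \<in> \<sigma> ` Qset n r" by (metis image_eqI)
    qed
  qed
  have "(\<lambda>(p, q). Lambda_pqr y n p q r \<phi>) ` Qset n r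
      = (\<lambda>P. (\<lambda>(p, q). Lambda_pqr (\<lambda>i. - y (n - i)) n p q r \<phi>) (\<sigma> P)) ` Qset n r"
    by (rule image_cong) (auto simp: \<sigma>_def pqr_reflect)
  also have "\<dots> = (\<lambda>(p, q). Lambda_pqr (\<lambda>i. - y (n - i)) n p q r \<phi>) ` (\<sigma> ` Qset n r)"
    by (simp add: image_image)
  finally show ?thesis unfolding Lambda_def sQ by simp
qed

lemma claim1:
  fixes x :: "nat \<Rightarrow> real" and \<phi> \<omega> :: "real \<Rightarrow> real"
  assumes k2: "2 \<le> k" and mk: "m = r + k"
    and mono: "\<forall>i<m. x i \<le> x (Suc i)"
    and strict: "\<forall>j. j + r + 1 \<le> m \<longrightarrow> x j < x (j + r + 1)"
    and phi: "inPhi \<phi>" and om: "inPhi \<omega>"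
    and h1: "\<forall>t\<in>{0<..(x m - x 0)}.
        \<phi> t \<le> t ^ (k - 1) * integral {t..2 * (x m - x 0)} (\<lambda>u. u powi (- int k) * \<omega> u)"
    and h2: "\<forall>t\<in>{(x m - x 0)..2 * (x m - x 0)}. \<phi> t \<le> \<omega> t"
  shows "Lambda r x (m - 1) \<phi> \<le> 2 ^ (k + 2) * (real k + 1) ^ 2 * (x m - x 0) * Lambda r x m \<omega>"
proof -
  have ne: "Qset (m - 1) r \<noteq> {}"
  proof -
    have "(0, r + 1) \<in> Qset (m - 1) r" using k2 mk by (auto simp: Qset_def)
    then show ?thesis by blast
  qed
  show ?thesis unfolding Lambda_def[of r x "m - 1"]
  proof (rule Max.boundedI)
    show "finite ((\<lambda>(p, q). Lambda_pqr x (m - 1) p q r \<phi>) ` Qset (m - 1) r)"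
      using Qset_fin by simp
    show "(\<lambda>(p, q). Lambda_pqr x (m - 1) p q r \<phi>) ` Qset (m - 1) r \<noteq> {}" using ne by simp
    fix v assume "v \<in> (\<lambda>(p, q). Lambda_pqr x (m - 1) p q r \<phi>) ` Qset (m - 1) r"
    then obtain p q where PQ: "(p, q) \<in> Qset (m - 1) r" and v: "v = Lambda_pqr x (m - 1) p q r \<phi>"
      by auto
    show "v \<le> 2 ^ (k + 2) * (real k + 1) ^ 2 * (x m - x 0) * Lambda r x m \<omega>"
      unfolding v by (rule one_pair[OF k2 mk mono strict phi om h1 h2 PQ])
  qed
qed

theorem lemma3p3:
  fixes k :: nat
  assumes "k \<ge> 2"
  shows "\<exists>c>0. \<forall>(r::nat) (m::nat) (x::nat \<Rightarrow> real) \<phi> \<omega>.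
     m = r + k \<longrightarrow>
     (\<forall>i<m. x i \<le> x (Suc i)) \<longrightarrow>
     (\<forall>j. j + r + 1 \<le> m \<longrightarrow> x j < x (j + r + 1)) \<longrightarrow>
     inPhi \<phi> \<longrightarrow> inPhi \<omega> \<longrightarrow>
     (\<forall>t\<in>{0<..(x m - x 0)}.
        \<phi> t \<le> t ^ (k - 1) * integral {t..2 * (x m - x 0)} (\<lambda>u. u powi (- int k) * \<omega> u)) \<longrightarrow>
     (\<forall>t\<in>{(x m - x 0)..2 * (x m - x 0)}. \<phi> t \<le> \<omega> t) \<longrightarrow>
     Lambda r x (m - 1) \<phi> \<le> c * (x m - x 0) * Lambda r x m \<omega> \<and>
     Lambda r (\<lambda>i. x (Suc i)) (m - 1) \<phi> \<le> c * (x m - x 0) * Lambda r x m \<omega>"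
proof (intro exI conjI allI impI)
  show "0 < (2::real) ^ (k + 2) * (real k + 1) ^ 2" by simp
  fix r m :: nat and x :: "nat \<Rightarrow> real" and \<phi> \<omega> :: "real \<Rightarrow> real"
  assume mk: "m = r + k"
    and mono: "\<forall>i<m. x i \<le> x (Suc i)"
    and strict: "\<forall>j. j + r + 1 \<le> m \<longrightarrow> x j < x (j + r + 1)"
    and phi: "inPhi \<phi>" and om: "inPhi \<omega>"
    and h1: "\<forall>t\<in>{0<..(x m - x 0)}.
        \<phi> t \<le> t ^ (k - 1) * integral {t..2 * (x m - x 0)} (\<lambda>u. u powi (- int k) * \<omega> u)"
    and h2: "\<forall>t\<in>{(x m - x 0)..2 * (x m - x 0)}. \<phi> t \<le> \<omega> t"
  show "Lambda r x (m - 1) \<phi> \<le> 2 ^ (k + 2) * (real k + 1) ^ 2 * (x m - x 0) * Lambda r x m \<omega>"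
    by (rule claim1[OF assms mk mono strict phi om h1 h2])
  define x' where "x' = (\<lambda>i. - x (m - i))"
  have L': "x' m - x' 0 = x m - x 0" unfolding x'_def by simp
  have mono': "\<forall>i<m. x' i \<le> x' (Suc i)"
  proof (intro allI impI)
    fix i assume i: "i < m"
    then have "x (m - Suc i) \<le> x (Suc (m - Suc i))" using mono by simp
    moreover have "Suc (m - Suc i) = m - i" using i by simp
    ultimately show "x' i \<le> x' (Suc i)" unfolding x'_def by simp
  qed
  have strict': "\<forall>j. j + r + 1 \<le> m \<longrightarrow> x' j < x' (j + r + 1)"
  proof (intro allI impI)
    fix j assume j: "j + r + 1 \<le> m"
    define i0 where "i0 = m - (j + r + 1)"
    have i0e: "i0 + r + 1 = m - j" using j unfolding i0_def by simp
    have "x i0 < x (i0 + r + 1)" using strict[rule_format, of i0] i0e by simp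
    then have "x i0 < x (m - j)" unfolding i0e .
    then show "x' j < x' (j + r + 1)" unfolding x'_def i0_def by simp
  qed
  have c1: "Lambda r x' (m - 1) \<phi> \<le> 2 ^ (k + 2) * (real k + 1) ^ 2 * (x' m - x' 0) * Lambda r x' m \<omega>"
    by (rule claim1[OF assms mk mono' strict' phi om]) (use h1 h2 L' in simp_all)
  have e1: "Lambda r x' m \<omega> = Lambda r x m \<omega>"
    unfolding x'_def using Lambda_reflect[of r x m \<omega>] by simp
  have e2: "Lambda r x' (m - 1) \<phi> = Lambda r (\<lambda>i. x (Suc i)) (m - 1) \<phi>"
  proof -
    have "Lambda r x' (m - 1) \<phi> = Lambda r (\<lambda>i. - x' (m - 1 - i)) (m - 1) \<phi>"
      by (rule Lambda_reflect)
    also have "\<dots> = Lambda r (\<lambda>i. x (Suc i)) (m - 1) \<phi>"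
      by (rule Lambda_cong) (use assms mk in \<open>auto simp: x'_def Suc_diff_Suc\<close>)
    finally show ?thesis .
  qed
  show "Lambda r (\<lambda>i. x (Suc i)) (m - 1) \<phi> \<le> 2 ^ (k + 2) * (real k + 1) ^ 2 * (x m - x 0) * Lambda r x m \<omega>"
    using c1 unfolding e1 e2 L' .
qed


end
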